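(* Let $g_A(w)=\exp\!\left(-\tfrac23\operatorname{Re} w^{3/2}\right)$ with the principal branch of $w^{3/2}$ (cut along $(-\infty,0]$). If $z\in\mathbb{C}\setminus\mathbb{R}$, then the map $x\mapsto g_A(x-z)$, $x\in[0,\infty)$, is decreasing. If $z\in\mathbb{R}$, then $g_A(x-z)=1$ for $x\in[0,z]$ and $x\mapsto g_A(x-z)$ is decreasing for $x\in(z,\infty)$. *)

theory Defs
  imports "HOL-Analysis.Analysis"
begin

text \<open>g_A(w) = exp(-(2/3) Re w^(3/2)), principal branch: complex powr uses the
principal logarithm ln (imaginary part in (-pi, pi]), i.e. cut along (-inf, 0].\<close>
definition gA :: "complex \<Rightarrow> real" where
  "gA w = exp (- (2/3) * Re (w powr (3/2)))"

end

theory Submission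
  imports Defs
begin

lemma key_real:
  fixes a1 a2 b1 b2 c :: real
  assumes "a1 > 0" "a2 > 0" "2*a1*b1 = c" "2*a2*b2 = c" "a1^2 - b1^2 < a2^2 - b2^2"
  shows "a1^3 - 3*a1*b1^2 < a2^3 - 3*a2*b2^2"
proof -
  have e: "a1*b1 = a2*b2" using assms by simp
  have e2: "a1^2*b1^2 = a2^2*b2^2" using e by (metis power_mult_distrib)
  have lt: "a1 < a2"
  proof (rule ccontr)
    assume "\<not> a1 < a2"
    hence le: "a2 \<le> a1" by simp
    hence "a2^2 \<le> a1^2" using assms by (simp add: power_mono)
    moreover have "b1^2 \<le> b2^2"
    proof -
      have "a2^2*b1^2 \<le> a1^2*b1^2" using \<open>a2^2 \<le> a1^2\<close> by (simp add: mult_right_mono)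
      also have "\<dots> = a2^2*b2^2" by (rule e2)
      finally show ?thesis using assms(2) by simp
    qed
    ultimately show False using assms(5) by linarith
  qed
  have "a1^3 < a2^3" using lt assms by (simp add: power_strict_mono)
  moreover have "a2*b2^2 \<le> a1*b1^2"
  proof -
    have "a2*(a2*b2^2) = a1*(a1*b1^2)" using e2 by (simp add: power2_eq_square algebra_simps)
    also have "\<dots> \<le> a2*(a1*b1^2)" using lt assms(1) by (intro mult_right_mono) auto
    finally show ?thesis using assms(2) by simp
  qed
  ultimately show ?thesis by linarith
qed

lemma powr_csqrt: "w powr (3/2) = csqrt w ^ 3"
proof (cases "w = 0")
  case True then show ?thesis by simp
next
  case False
  have "csqrt w ^ 3 = exp (Ln w / 2) ^ 3" using False by (simp add: csqrt_exp_Ln)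
  also have "\<dots> = exp (of_nat 3 * (Ln w / 2))" by (simp only: exp_of_nat_mult)
  also have "\<dots> = exp ((3/2) * Ln w)" by simp
  finally show ?thesis using False by (simp add: powr_def)
qed

lemma Re_cube: "Re (s ^ 3) = Re s ^ 3 - 3 * Re s * Im s ^ 2"
  by (simp add: power3_eq_cube power2_eq_square algebra_simps)

lemma mono_main:
  assumes "Im w1 = Im w2" "Re w1 < Re w2" "Re (csqrt w1) > 0" "Re (csqrt w2) > 0"
  shows "Re (w1 powr (3/2)) < Re (w2 powr (3/2))"
proof -
  define s1 where "s1 = csqrt w1"
  define s2 where "s2 = csqrt w2"
  have q1: "s1^2 = w1" "s2^2 = w2" unfolding s1_def s2_def by simp_all
  have i1: "2*Re s1*Im s1 = Im w1" using arg_cong[OF q1(1), of Im]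
    by (simp add: power2_eq_square algebra_simps)
  have i2: "2*Re s2*Im s2 = Im w1" using arg_cong[OF q1(2), of Im] assms(1)
    by (simp add: power2_eq_square algebra_simps)
  have r1: "Re s1^2 - Im s1^2 = Re w1" using arg_cong[OF q1(1), of Re]
    by (simp add: power2_eq_square)
  have r2: "Re s2^2 - Im s2^2 = Re w2" using arg_cong[OF q1(2), of Re]
    by (simp add: power2_eq_square)
  have "Re s1^3 - 3*Re s1*Im s1^2 < Re s2^3 - 3*Re s2*Im s2^2"
    by (rule key_real[OF _ _ i1 i2]) (use assms r1 r2 s1_def s2_def in auto)
  then show ?thesis unfolding powr_csqrt Re_cube s1_def s2_def .
qed

lemma Re_csqrt_pos:
  assumes "Im w \<noteq> 0 \<or> Re w > 0"
  shows "Re (csqrt w) > 0"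
proof -
  define s where "s = csqrt w"
  have q: "s^2 = w" unfolding s_def by simp
  have i: "2*Re s*Im s = Im w" using arg_cong[OF q, of Im] by (simp add: power2_eq_square algebra_simps)
  have r: "Re s^2 - Im s^2 = Re w" using arg_cong[OF q, of Re] by (simp add: power2_eq_square)
  have "Re s \<ge> 0" unfolding s_def by (rule Re_csqrt)
  moreover have "Re s \<noteq> 0"
  proof
    assume "Re s = 0"
    then have "Im w = 0" "Re w + (Im s)^2 = 0" using i r by simp_all
    then show False using assms by (smt (verit) zero_le_power2)
  qed
  ultimately have "Re s > 0" by linarith
  then show ?thesis by (simp only: s_def)
qed

lemma Re_nonpos_real:
  fixes v :: real
  assumes "v \<le> 0"
  shows "Re (complex_of_real v powr (3/2)) = 0"
proof -
  define s where "s = csqrt (complex_of_real v)"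
  have q: "s^2 = complex_of_real v" unfolding s_def by simp
  have i: "2*Re s*Im s = 0" using arg_cong[OF q, of Im] by (auto simp: power2_eq_square)
  have r: "Re s^2 - Im s^2 = v" using arg_cong[OF q, of Re] by (simp add: power2_eq_square)
  have "Re s * Im s^2 = 0 \<and> Re s ^3 = 0"
  proof (cases "Re s = 0")
    case True then show ?thesis by simp
  next
    case False
    then have "Im s = 0" using i by auto
    then have "Re s^2 = v" using r by simp
    then have "Re s^2 = 0" using assms by (smt (verit) zero_le_power2)
    then show ?thesis by simp
  qed
  then show ?thesis unfolding powr_csqrt Re_cube s_def by simp
qed

theorem lemma2p2:
  fixes z :: complex
  shows "(z \<notin> \<real> \<longrightarrow>
           (\<forall>x\<in>{0::real..}. \<forall>y\<in>{0::real..}. x < y \<longrightarrow>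
              gA (of_real y - z) < gA (of_real x - z)))
       \<and> (z \<in> \<real> \<longrightarrow>
           (\<forall>x\<in>{0::real..Re z}. gA (of_real x - z) = 1) \<and>
           (\<forall>x\<in>{Re z<..}. \<forall>y\<in>{Re z<..}. x < y \<longrightarrow>
              gA (of_real y - z) < gA (of_real x - z)))"
proof (intro conjI impI)
  assume "z \<notin> \<real>"
  then have nz: "Im z \<noteq> 0" using complex_is_Real_iff by blast
  show "\<forall>x\<in>{0::real..}. \<forall>y\<in>{0::real..}. x < y \<longrightarrow>
              gA (of_real y - z) < gA (of_real x - z)"
  proof (intro ballI impI)
    fix x y :: real assume "x < y"
    have "Re ((of_real x - z) powr (3/2)) < Re ((of_real y - z) powr (3/2))"
      by (rule mono_main; (rule Re_csqrt_pos)?) (use \<open>x < y\<close> nz in simp_all)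
    then show "gA (of_real y - z) < gA (of_real x - z)" unfolding gA_def by simp
  qed
next
  assume "z \<in> \<real>"
  then have z: "z = of_real (Re z)" using complex_is_Real_iff complex_eq_iff by auto
  show "\<forall>x\<in>{0::real..Re z}. gA (of_real x - z) = 1"
  proof
    fix x assume "x \<in> {0::real..Re z}"
    then have "Re (complex_of_real (x - Re z) powr (3/2)) = 0" by (intro Re_nonpos_real) auto
    moreover have "of_real x - z = complex_of_real (x - Re z)" by (subst z) simp
    ultimately show "gA (of_real x - z) = 1" unfolding gA_def by simp
  qed
  show "\<forall>x\<in>{Re z<..}. \<forall>y\<in>{Re z<..}. x < y \<longrightarrow>
              gA (of_real y - z) < gA (of_real x - z)"
  proof (intro ballI impI)
    fix x y :: real assume "x \<in> {Re z<..}" "y \<in> {Re z<..}" "x < y"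
    have "Re ((of_real x - z) powr (3/2)) < Re ((of_real y - z) powr (3/2))"
      by (rule mono_main; (rule Re_csqrt_pos)?) (use \<open>x < y\<close> \<open>x \<in> {Re z<..}\<close> \<open>y \<in> {Re z<..}\<close> in simp_all)
    then show "gA (of_real y - z) < gA (of_real x - z)" unfolding gA_def by simp
  qed
qed

end
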